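(* Let $q\equiv1\pmod{12}$, and suppose $-1/2$ is a cube and $-1/3$ is a fourth power in $\mathbb{F}_q$. Then $-1/3$ is a square in $\mathbb{F}_q$, and the line $L_c$ through $\mathbf{P}(1,0,0,1)$ and $\mathbf{P}(0,0,1,0)$ and the line $\ell_{-1/3}$ through $\mathbf{P}(0,-1/3,0,1)$ and $\mathbf{P}(1,0,1,0)$ belong to the same orbit of $G_q$.
   Context: Points of $\mathrm{PG}(3,q)$ are written $\mathbf{P}(x_0,x_1,x_2,x_3)$ over $\mathbb{F}_q$. The twisted cubic is $\mathscr{C}=\{\mathbf{P}(t^3,t^2,t,1):t\in\mathbb{F}_q\}\cup\{\mathbf{P}(1,0,0,0)\}$ and $G_q$ is the group of projectivities of $\mathrm{PG}(3,q)$ fixing $\mathscr{C}$. Two lines are in the same orbit if an element of $G_q$ maps one onto the other. *)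

theory Defs
  imports "HOL-Analysis.Cartesian_Space"
begin

text \<open>Homogeneous coordinates: a point P(x0,x1,x2,x3) of PG(3,q) is represented by the
  1-dimensional subspace of F_q^4 spanned by the nonzero vector (x0,x1,x2,x3);
  a line is represented by the 2-dimensional subspace of F_q^4 it spans.\<close>

definition vec4 :: "'a::field \<Rightarrow> 'a \<Rightarrow> 'a \<Rightarrow> 'a \<Rightarrow> 'a^4" where
  "vec4 a b c d = vector [a, b, c, d]"

definition twisted_cubic_cone :: "((('a::field)^4) set)" where
  "twisted_cubic_cone =
     {c *s vec4 (t^3) (t^2) t 1 | c t. c \<noteq> 0} \<union> {c *s vec4 1 0 0 0 | c. c \<noteq> 0}"

text \<open>Matrices inducing the projectivities of PG(3,q) that fix the twisted cubic
  (the group G_q; proportional matrices induce the same projectivity).\<close>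
definition Gq_matrices :: "(('a::field)^4^4) set" where
  "Gq_matrices = {A. invertible A \<and> (\<lambda>x. A *v x) ` twisted_cubic_cone = twisted_cubic_cone}"

text \<open>The line through P(u) and P(w) (u, w linearly independent), as a 2-dim subspace.\<close>
definition proj_line :: "('a::field)^4 \<Rightarrow> 'a^4 \<Rightarrow> ('a^4) set" where
  "proj_line u w = {a *s u + b *s w | a b. True}"

definition same_Gq_orbit :: "(('a::field)^4) set \<Rightarrow> ('a^4) set \<Rightarrow> bool" where
  "same_Gq_orbit L M \<longleftrightarrow> (\<exists>A \<in> Gq_matrices. (\<lambda>x. A *v x) ` L = M)"

end

theory Submission
  imports Defs "HOL-Number_Theory.Residues" "HOL-Computational_Algebra.Polynomial"
begin


lemma vec4_nth [simp]: "vec4 a b c d $ 1 = a" "vec4 a b c d $ 2 = b" "vec4 a b c d $ 3 = c" "vec4 a b c d $ 4 = d"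
  by (simp_all add: vec4_def vector_def)

lemma vec4_eq_iff: "v = vec4 a b c d \<longleftrightarrow> v$1 = a \<and> v$2 = b \<and> v$3 = c \<and> v$4 = d"
  by (auto simp: vec_eq_iff forall_4)

lemma vec4_inj: "vec4 a b c d = vec4 a' b' c' d' \<longleftrightarrow> a = a' \<and> b = b' \<and> c = c' \<and> d = d'"
  by (simp add: vec4_eq_iff)

lemma vec4_eta: "v = vec4 (v$1) (v$2) (v$3) (v$4)"
  by (simp add: vec4_eq_iff)

lemma vec4_scale [simp]: "k *s vec4 a b c d = vec4 (k*a) (k*b) (k*c) (k*d)"
  by (simp add: vec4_eq_iff)

lemma vec4_add [simp]: "vec4 a b c d + vec4 a' b' c' d' = vec4 (a+a') (b+b') (c+c') (d+d')"
  by (simp add: vec4_eq_iff)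

definition symA :: "'a::field \<Rightarrow> 'a \<Rightarrow> 'a \<Rightarrow> 'a \<Rightarrow> 'a^4^4" where
  "symA a b c d = vector [vector [a^3, 3*a^2*b, 3*a*b^2, b^3],
                          vector [a^2*c, a^2*d+2*a*b*c, 2*a*b*d+b^2*c, b^2*d],
                          vector [a*c^2, 2*a*c*d+b*c^2, a*d^2+2*b*c*d, b*d^2],
                          vector [c^3, 3*c^2*d, 3*c*d^2, d^3]]"

lemma symA_mv: "symA a b c d *v v = vec4
   (a^3 * v$1 + 3*a^2*b * v$2 + 3*a*b^2 * v$3 + b^3 * v$4)
   (a^2*c * v$1 + (a^2*d+2*a*b*c) * v$2 + (2*a*b*d+b^2*c) * v$3 + b^2*d * v$4)
   (a*c^2 * v$1 + (2*a*c*d+b*c^2) * v$2 + (a*d^2+2*b*c*d) * v$3 + b*d^2 * v$4)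
   (c^3 * v$1 + 3*c^2*d * v$2 + 3*c*d^2 * v$3 + d^3 * v$4)"
  by (simp add: vec4_eq_iff symA_def matrix_vector_mult_def sum_4 vector_def)

lemma mv_scale: "(A::'a::field^4^4) *v (k *s v) = k *s (A *v v)"
  by (simp add: matrix_vector_mult_def vec_eq_iff sum_distrib_left mult_ac)

lemma mv_add: "(A::'a::field^4^4) *v (v + w) = A *v v + A *v w"
  by (simp add: matrix_vector_right_distrib)

lemma symA_scale: "symA (k*a) (k*b) (k*c) (k*d) *v v = k^3 *s (symA a b c d *v v)"
  unfolding symA_mv vec4_scale vec4_inj apply (intro conjI)
  apply (simp_all add: algebra_simps power2_eq_square power3_eq_cube)
  done

lemma symA_inv0: "symA a b c d *v (symA d (-b) (-c) a *v vec4 p1 p2 p3 p4) = (a*d-b*c)^3 *s vec4 p1 p2 p3 p4"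
  unfolding symA_mv vec4_nth vec4_scale vec4_inj apply (intro conjI)
  apply (simp_all add: algebra_simps power2_eq_square power3_eq_cube)
  done

lemma symA_inv: "symA a b c d *v (symA d (-b) (-c) a *v v) = (a*d-b*c)^3 *s v"
  using symA_inv0[of a b c d "v$1" "v$2" "v$3" "v$4"] vec4_eta[of v] by simp


lemma cone_I1: "k \<noteq> 0 \<Longrightarrow> w = vec4 (k*t^3) (k*t^2) (k*t) k \<Longrightarrow> w \<in> twisted_cubic_cone"
  unfolding twisted_cubic_cone_def by auto

lemma cone_I2: "k \<noteq> 0 \<Longrightarrow> w = vec4 k 0 0 0 \<Longrightarrow> w \<in> twisted_cubic_cone"
  unfolding twisted_cubic_cone_def by auto

lemma cone_E:
  assumes "v \<in> twisted_cubic_cone"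
  obtains k t where "k \<noteq> 0" "v = vec4 (k*t^3) (k*t^2) (k*t) k"
        | k where "k \<noteq> 0" "v = vec4 k 0 0 0"
  using assms unfolding twisted_cubic_cone_def by auto

lemma symA_cone:
  fixes a b c d :: "'a::field"
  assumes det: "a*d - b*c \<noteq> 0" and v: "v \<in> twisted_cubic_cone"
  shows "symA a b c d *v v \<in> twisted_cubic_cone"
  using v
proof (cases rule: cone_E)
  case (1 k t)
  have img: "symA a b c d *v v = vec4 (k*(a*t+b)^3) (k*(a*t+b)^2*(c*t+d)) (k*(a*t+b)*(c*t+d)^2) (k*(c*t+d)^3)"
    unfolding 1 symA_mv vec4_nth vec4_inj
    by (simp add: algebra_simps power2_eq_square power3_eq_cube)
  show ?thesis
  proof (cases "c*t+d = 0")
    case False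
    define s where "s = (a*t+b)/(c*t+d)"
    have ab: "a*t+b = (c*t+d) * s" using False unfolding s_def by simp
    show ?thesis
      by (rule cone_I1[where k="k*(c*t+d)^3" and t="s"])
         (use False 1(1) in \<open>simp_all add: img ab vec4_inj power_mult_distrib power2_eq_square power3_eq_cube mult_ac\<close>)
  next
    case True
    have "a*t+b \<noteq> 0"
    proof
      assume "a*t+b = 0"
      then have "b = -a*t" "d = -c*t" using True by (simp_all add: algebra_simps eq_neg_iff_add_eq_0)
      then show False using det by (simp add: algebra_simps)
    qed
    moreover have "symA a b c d *v v = vec4 (k*(a*t+b)^3) 0 0 0" using img True by simp
    ultimately show ?thesis using cone_I2[of "k*(a*t+b)^3"] 1(1) by simp
  qed
next
  case (2 k)
  have img: "symA a b c d *v v = vec4 (k*a^3) (k*a^2*c) (k*a*c^2) (k*c^3)"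
    unfolding 2 symA_mv vec4_nth vec4_inj by simp
  show ?thesis
  proof (cases "c = 0")
    case False
    define u where "u = a/c"
    have ab: "a = c * u" using False unfolding u_def by simp
    have img2: "symA a b c d *v v = vec4 ((k*c^3)*u^3) ((k*c^3)*u^2) ((k*c^3)*u) (k*c^3)"
      unfolding img by (simp add: ab vec4_inj power_mult_distrib power2_eq_square power3_eq_cube mult_ac)
    show ?thesis
      by (rule cone_I1[OF _ img2]) (use False 2(1) in simp)
  next
    case True
    then have "a \<noteq> 0" using det by auto
    have "symA a b c d *v v = vec4 (k*a^3) 0 0 0" using img True by simp
    then show ?thesis by (rule cone_I2[rotated]) (simp add: \<open>a \<noteq> 0\<close> 2(1))
  qed
qed

definition symAinv :: "'a::field \<Rightarrow> 'a \<Rightarrow> 'a \<Rightarrow> 'a \<Rightarrow> 'a^4^4" where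
  "symAinv a b c d = symA ((1/(a*d-b*c))*d) ((1/(a*d-b*c))*(-b)) ((1/(a*d-b*c))*(-c)) ((1/(a*d-b*c))*a)"

lemma symAinv_mv: "symAinv a b c d *v v = (1/(a*d-b*c))^3 *s (symA d (-b) (-c) a *v v)"
  unfolding symAinv_def by (rule symA_scale)

lemma symA_right_inv:
  assumes "a*d - b*c \<noteq> (0::'a::field)"
  shows "symA a b c d *v (symAinv a b c d *v v) = v"
  using assms by (simp add: symAinv_mv mv_scale symA_inv field_simps)

lemma symAinv_det:
  assumes "a*d - b*c \<noteq> (0::'a::field)"
  shows "((1/(a*d-b*c))*d) * ((1/(a*d-b*c))*a) - ((1/(a*d-b*c))*(-b)) * ((1/(a*d-b*c))*(-c)) \<noteq> 0"
proof -
  have "\<And>u. (u*d) * (u*a) - (u*(-b)) * (u*(-c)) = u^2 * (a*d-b*c)" by (simp add: algebra_simps power2_eq_square)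
  then show ?thesis using assms by (simp add: mult.commute)
qed

lemma symA_Gq:
  assumes det: "a*d - b*c \<noteq> (0::'a::{field})"
  shows "symA a b c d \<in> Gq_matrices"
proof -
  have r: "symA a b c d ** symAinv a b c d = mat 1"
    unfolding matrix_eq
    by (simp add: matrix_vector_mul_assoc[symmetric] symA_right_inv[OF det] matrix_vector_mul_lid)
  then have l: "symAinv a b c d ** symA a b c d = mat 1"
    using matrix_left_right_inverse by blast
  have inv: "invertible (symA a b c d)"
    unfolding invertible_def using r l by blast
  have sub: "(\<lambda>x. symA a b c d *v x) ` twisted_cubic_cone \<subseteq> twisted_cubic_cone"
    using symA_cone[OF det] by blast
  have sup: "z \<in> (\<lambda>x. symA a b c d *v x) ` twisted_cubic_cone" if z: "z \<in> twisted_cubic_cone" for z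
  proof
    show "z = symA a b c d *v (symAinv a b c d *v z)" using symA_right_inv[OF det] by simp
    show "symAinv a b c d *v z \<in> twisted_cubic_cone"
      unfolding symAinv_def by (rule symA_cone[OF symAinv_det[OF det] z])
  qed
  show ?thesis unfolding Gq_matrices_def using inv sub sup by blast
qed



lemma fermat_ff:
  fixes x :: "'a::{field,finite}"
  assumes "x \<noteq> 0"
  shows "x ^ (CARD('a) - 1) = 1"
proof -
  let ?S = "UNIV - {0::'a}"
  have cardS: "card ?S = CARD('a) - 1" by (simp add: card_Diff_singleton)
  have bij: "(\<lambda>a. x*a) ` ?S = ?S"
  proof
    show "(\<lambda>a. x*a) ` ?S \<subseteq> ?S" using assms by auto
    show "?S \<subseteq> (\<lambda>a. x*a) ` ?S"
    proof
      fix b assume "b \<in> ?S"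
      then have "b = x * (b/x)" "b/x \<in> ?S" using assms by auto
      then show "b \<in> (\<lambda>a. x*a) ` ?S" by blast
    qed
  qed
  have inj: "inj_on (\<lambda>a. x*a) ?S" using assms by (auto intro: inj_onI)
  have "prod (\<lambda>a. a) ?S = prod (\<lambda>a. a) ((\<lambda>a. x*a) ` ?S)" using bij by simp
  also have "\<dots> = prod (\<lambda>a. x*a) ?S" using prod.reindex[OF inj, of "\<lambda>a. a"] by simp
  also have "\<dots> = x ^ card ?S * prod (\<lambda>a. a) ?S" by (simp add: prod.distrib)
  finally have "prod (\<lambda>a. a) ?S = x ^ card ?S * prod (\<lambda>a. a) ?S" .
  moreover have "prod (\<lambda>a. a) ?S \<noteq> 0" by (simp add: prod_zero_iff)
  ultimately have "x ^ card ?S = 1" by simp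
  then show ?thesis using cardS by simp
qed

lemma sqrt_minus_one:
  assumes "CARD('a::{field,finite}) mod 4 = 1"
  shows "\<exists>i::'a. i^2 = -1"
proof -
  define q where "q = CARD('a)"
  define m where "m = (q - 1) div 2"
  have "card {0::'a, 1} \<le> card (UNIV::'a set)" by (rule card_mono) auto
  then have q2: "q \<ge> 2" unfolding q_def by simp
  have q4: "q mod 4 = 1" using assms unfolding q_def .
  have qm: "q - 1 = 2*m" "m > 0" "even m" using q4 q2 unfolding m_def by presburger+
  define p :: "'a poly" where "p = monom 1 m - 1"
  have coeffp: "coeff p m = 1" using qm unfolding p_def by (simp add: coeff_monom)
  then have p0: "p \<noteq> 0" by auto
  have degp: "degree p \<le> m" unfolding p_def
    by (metis degree_diff_le degree_monom_le degree_1 zero_le)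
  have roots: "{x. poly p x = 0} = {x. x^m = 1}" unfolding p_def by (simp add: poly_monom)
  have "card {x::'a. x^m = 1} \<le> m" using card_poly_roots_bound[OF p0] degp roots by simp
  moreover have "card (UNIV - {0::'a}) = 2*m" using qm unfolding q_def by (simp add: card_Diff_singleton)
  ultimately have "\<not> (UNIV - {0::'a}) \<subseteq> {x. x^m = 1}"
    using card_mono[of "{x::'a. x^m = 1}" "UNIV - {0}"] qm(2) by auto
  then obtain x :: 'a where x0: "x \<noteq> 0" and xm: "x^m \<noteq> 1" by auto
  have "(x^m)^2 = 1" using fermat_ff[OF x0] qm(1) unfolding q_def by (simp add: power_mult[symmetric] mult.commute)
  then have "(x^m - 1) * (x^m + 1) = 0" by (simp add: algebra_simps power2_eq_square)
  then have "x^m = -1" using xm by (simp add: eq_neg_iff_add_eq_0)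
  obtain n where "m = 2*n" using qm(3) by blast
  then have "(x^n)^2 = -1" using \<open>x^m = -1\<close> by (simp add: power_mult[symmetric] mult.commute)
  then show ?thesis by blast
qed

lemma cert_F1:
  fixes R x a b c d :: "'a::field"
  assumes g1: "3*R^4+6*R^2-1 = 0" and g2: "2*x^3+1 = 0" and three: "(3::'a) \<noteq> 0"
    and ha: "a = 2*R*x*(1+R^2)" and hb: "b = R*(R^2-1)" and hc: "c = -4*R^2*x" and hd: "d = R^2-1"
  shows "(a^3+b^3) - (a*c^2+b*d^2) = 0"
proof -
  have "(9::'a) * ((a^3+b^3) - (a*c^2+b*d^2)) = (3*R^4+6*R^2-1)*((55)*R^1 + (128)*R^1*x^3 + (-18)*R^3 + (-72)*R^3*x^3 + (3)*R^5 + (24)*R^5*x^3) + (2*x^3+1)*((64)*R^1 + (-384)*R^3)"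
    unfolding ha hb hc hd by (simp add: algebra_simps power2_eq_square power3_eq_cube eval_nat_numeral)
  then have "(9::'a) * ((a^3+b^3) - (a*c^2+b*d^2)) = 0" using g1 g2 by simp
  moreover have "(9::'a) \<noteq> 0" using three no_zero_divisors[of "3::'a" 3] by simp
  ultimately show ?thesis by (metis mult_eq_0_iff)
qed

lemma cert_F2:
  fixes R x a b c d :: "'a::field"
  assumes g1: "3*R^4+6*R^2-1 = 0" and g2: "2*x^3+1 = 0" and three: "(3::'a) \<noteq> 0"
    and ha: "a = 2*R*x*(1+R^2)" and hb: "b = R*(R^2-1)" and hc: "c = -4*R^2*x" and hd: "d = R^2-1"
  shows "3*(a^2*c+b^2*d) + (c^3+d^3) = 0"
proof -
  have "(3::'a) * (3*(a^2*c+b^2*d) + (c^3+d^3)) = (3*R^4+6*R^2-1)*((35) + (64)*x^3 + (-14)*R^2 + (-64)*R^2*x^3 + (3)*R^4 + (-48)*R^4*x^3) + (2*x^3+1)*((32) + (-224)*R^2)"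
    unfolding ha hb hc hd by (simp add: algebra_simps power2_eq_square power3_eq_cube eval_nat_numeral)
  then have "(3::'a) * (3*(a^2*c+b^2*d) + (c^3+d^3)) = 0" using g1 g2 by simp
  moreover have "(3::'a) \<noteq> 0" using three no_zero_divisors[of "3::'a" 3] by simp
  ultimately show ?thesis by (metis mult_eq_0_iff)
qed

lemma cert_F3:
  fixes R x a b c d :: "'a::field"
  assumes g1: "3*R^4+6*R^2-1 = 0" and g2: "2*x^3+1 = 0" and three: "(3::'a) \<noteq> 0"
    and ha: "a = 2*R*x*(1+R^2)" and hb: "b = R*(R^2-1)" and hc: "c = -4*R^2*x" and hd: "d = R^2-1"
  shows "3*a*b^2 - (a*d^2+2*b*c*d) = 0"
proof -
  have "(1::'a) * (3*a*b^2 - (a*d^2+2*b*c*d)) = (3*R^4+6*R^2-1)*((2)*R^1*x^1 + (-4)*R^3*x^1 + (2)*R^5*x^1) + (2*x^3+1)*0"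
    unfolding ha hb hc hd by (simp add: algebra_simps power2_eq_square power3_eq_cube eval_nat_numeral)
  then have "(1::'a) * (3*a*b^2 - (a*d^2+2*b*c*d)) = 0" using g1 g2 by simp
  moreover have "(1::'a) \<noteq> 0" using three no_zero_divisors[of "3::'a" 3] by simp
  ultimately show ?thesis by (metis mult_eq_0_iff)
qed

lemma cert_F4:
  fixes R x a b c d :: "'a::field"
  assumes g1: "3*R^4+6*R^2-1 = 0" and g2: "2*x^3+1 = 0" and three: "(3::'a) \<noteq> 0"
    and ha: "a = 2*R*x*(1+R^2)" and hb: "b = R*(R^2-1)" and hc: "c = -4*R^2*x" and hd: "d = R^2-1"
  shows "2*a*b*d+b^2*c+c*d^2 = 0"
proof -
  have "(1::'a) * (2*a*b*d+b^2*c+c*d^2) = (3*R^4+6*R^2-1)*0 + (2*x^3+1)*0"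
    unfolding ha hb hc hd by (simp add: algebra_simps power2_eq_square power3_eq_cube eval_nat_numeral)
  then have "(1::'a) * (2*a*b*d+b^2*c+c*d^2) = 0" using g1 g2 by simp
  moreover have "(1::'a) \<noteq> 0" using three no_zero_divisors[of "3::'a" 3] by simp
  ultimately show ?thesis by (metis mult_eq_0_iff)
qed

lemma Lc_mem: "v$2 = 0 \<Longrightarrow> v$1 = v$4 \<Longrightarrow> v \<in> proj_line (vec4 1 0 0 (1::'a::field)) (vec4 0 0 1 0)"
  unfolding proj_line_def
  by (rule CollectI, rule exI[of _ "v$1"], rule exI[of _ "v$3"]) (subst vec4_eta[of v], simp add: vec4_inj)

theorem lemma7p5:
  fixes q :: nat
  assumes "CARD('a::{field,finite}) = q"
    and "q mod 12 = 1"
    and "\<exists>x::'a. x ^ 3 = - 1 / 2"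
    and "\<exists>y::'a. y ^ 4 = - 1 / 3"
  shows "(\<exists>z::'a. z ^ 2 = - 1 / 3) \<and>
         same_Gq_orbit (proj_line (vec4 1 0 0 (1::'a)) (vec4 0 0 1 0))
                       (proj_line (vec4 0 (- 1 / 3) 0 (1::'a)) (vec4 1 0 1 0))"
proof -
  have ch: "of_nat q = (0::'a)"
    using CHAR_dvd_CARD[where 'a='a] assms(1) of_nat_eq_0_iff_char_dvd by metis
  have "q = 12*(q div 12) + 1" using div_mult_mod_eq[of q 12] assms(2) by linarith
  then have e12: "(12::'a) * of_nat (q div 12) + 1 = 0"
    using ch by (metis of_nat_1 of_nat_add of_nat_mult of_nat_numeral)
  have two: "(2::'a) \<noteq> 0"
  proof
    assume "(2::'a) = 0"
    moreover have "(12::'a) = 6*2" by simp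
    ultimately have "(12::'a) = 0" by simp
    then show False using e12 by simp
  qed
  have three: "(3::'a) \<noteq> 0"
  proof
    assume "(3::'a) = 0"
    moreover have "(12::'a) = 4*3" by simp
    ultimately have "(12::'a) = 0" by simp
    then show False using e12 by simp
  qed
  obtain x :: 'a where x: "x^3 = -1/2" using assms(3) by blast
  obtain y :: 'a where y: "y^4 = -1/3" using assms(4) by blast
  have part1: "\<exists>z::'a. z ^ 2 = - 1 / 3"
    by (rule exI[of _ "y^2"]) (simp add: y power_mult[symmetric])
  have "CARD('a) mod 4 = 1" using assms(1,2) by presburger
  then obtain i :: 'a where i: "i^2 = -1" using sqrt_minus_one by blast
  have y0: "y \<noteq> 0" using y three by auto
  define rt3 where "rt3 = -3*i*y^2"
  have rt3sq: "rt3^2 = 3"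
  proof -
    have "rt3^2 = 9 * i^2 * y^4" unfolding rt3_def by (simp add: power_mult_distrib power_mult[symmetric])
    also have "\<dots> = 3" using three by (simp only: i y) (simp add: field_simps)
    finally show ?thesis .
  qed
  have rt30: "rt3 \<noteq> 0" using rt3sq three by auto
  define wq where "wq = 3*y^3*(1+i)"
  have wqsq: "wq^2 = 2*rt3"
  proof -
    have "wq^2 = 9*y^4*y^2*(1+2*i+i^2)" unfolding wq_def by (simp add: power2_eq_square power3_eq_cube algebra_simps eval_nat_numeral)
    also have "\<dots> = 2*rt3" unfolding rt3_def using three by (simp only: i y) (simp add: field_simps)
    finally show ?thesis .
  qed
  have wq0: "wq \<noteq> 0" using wqsq rt30 two by auto
  define R where "R = (rt3 - 1)/wq"
  have R2: "R^2 = (2 - rt3)/rt3"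
  proof -
    have "R^2 = (rt3^2 - 2*rt3 + 1)/(2*rt3)" unfolding R_def using wqsq by (simp add: power_divide power2_eq_square algebra_simps)
    also have "\<dots> = (2 - rt3)/rt3" using rt3sq rt30 two by (simp add: field_simps)
    finally show ?thesis .
  qed
  have g1: "3*R^4+6*R^2-1 = 0"
  proof -
    have R4: "R^4 = (R^2)^2" by (simp add: power_mult[symmetric])
    have num: "3*(2-rt3)^2 + 6*(2-rt3)*rt3 - rt3^2 = 12 - 4*rt3^2" by (simp add: algebra_simps power2_eq_square)
    have "3*R^4+6*R^2-1 = 3*((2-rt3)/rt3)^2 + 6*((2-rt3)/rt3) - 1" unfolding R4 R2 ..
    also have "\<dots> = (3*(2-rt3)^2 + 6*(2-rt3)*rt3 - rt3^2)/rt3^2"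
      using rt30 by (simp add: field_simps power2_eq_square)
    also have "\<dots> = 0" unfolding num by (simp add: rt3sq)
    finally show ?thesis .
  qed
  have g2: "2*x^3+1 = 0" using x two by (simp add: field_simps)
  define a where "a = 2*R*x*(1+R^2)"
  define b where "b = R*(R^2-1)"
  define c where "c = -4*R^2*x"
  define d where "d = R^2-1"
  note hs = g1 g2 three a_def b_def c_def d_def
  have F1: "(a^3+b^3) - (a*c^2+b*d^2) = 0" by (rule cert_F1[OF hs])
  have F2: "3*(a^2*c+b^2*d) + (c^3+d^3) = 0" by (rule cert_F2[OF hs])
  have F3: "3*a*b^2 - (a*d^2+2*b*c*d) = 0" by (rule cert_F3[OF hs])
  have F4: "2*a*b*d+b^2*c+c*d^2 = 0" by (rule cert_F4[OF hs])
  have R0: "R \<noteq> 0" using g1 by auto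
  have x0: "x \<noteq> 0" using g2 by auto
  have R1: "R^2 - 1 \<noteq> 0"
  proof
    assume "R^2 - 1 = 0"
    then have "R^2 = 1" by simp
    moreover have "R^4 = (R^2)^2" by (simp add: power_mult[symmetric])
    ultimately have "R^4 = 1" by simp
    then have "(8::'a) = 0" using g1 \<open>R^2 = 1\<close> by simp
    then have "(2::'a)*2*2 = 0" by simp
    then show False using two by (metis mult_eq_0_iff)
  qed
  have R3: "1 + 3*R^2 \<noteq> 0"
  proof
    assume h: "1 + 3*R^2 = 0"
    have "3*(3*R^4+6*R^2-1) = (3*R^2)^2 + 6*(3*R^2) - 3" by (simp add: algebra_simps power2_eq_square eval_nat_numeral)
    also have "3*R^2 = -1" using h by (simp add: eq_neg_iff_add_eq_0 add.commute)
    finally have "(8::'a) = 0" using g1 by simp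
    then have "(2::'a)*2*2 = 0" by simp
    then show False using two by (metis mult_eq_0_iff)
  qed
  have det: "a*d - b*c = 2*R*x*(R^2-1)*(1+3*R^2)"
    unfolding a_def b_def c_def d_def by (simp add: algebra_simps power2_eq_square eval_nat_numeral)
  have det0: "a*d - b*c \<noteq> 0" unfolding det using R0 x0 R1 R3 two by simp
  define A where "A = symA a b c d"
  have AG: "A \<in> Gq_matrices" unfolding A_def by (rule symA_Gq[OF det0])
  have img: "(\<lambda>v. A *v v) ` proj_line (vec4 1 0 0 1) (vec4 0 0 1 0) = proj_line (vec4 0 (- 1 / 3) 0 1) (vec4 1 0 1 0)"
  proof (intro equalityI subsetI)
    fix v assume "v \<in> (\<lambda>v. A *v v) ` proj_line (vec4 1 0 0 1) (vec4 0 0 1 0)"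
    then obtain \<alpha> \<beta> where v: "v = A *v (\<alpha> *s vec4 1 0 0 1 + \<beta> *s vec4 0 0 1 0)"
      unfolding proj_line_def by auto
    have v2: "v = vec4 (\<alpha>*(a^3+b^3) + \<beta>*(3*a*b^2)) (\<alpha>*(a^2*c+b^2*d)+\<beta>*(2*a*b*d+b^2*c))
                      (\<alpha>*(a*c^2+b*d^2) + \<beta>*(a*d^2+2*b*c*d)) (\<alpha>*(c^3+d^3)+\<beta>*(3*c*d^2))"
      unfolding v A_def symA_mv by (simp add: vec4_inj algebra_simps)
    have e1: "a*c^2+b*d^2 = a^3+b^3" using F1 by (metis right_minus_eq)
    have e2': "3*(a^2*c+b^2*d) = -(c^3+d^3)" using eq_neg_iff_add_eq_0[THEN iffD2, OF F2] .
    have e2: "a^2*c+b^2*d = -(c^3+d^3)/3"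
    proof -
      have "a^2*c+b^2*d = (3*(a^2*c+b^2*d))/3" using three by simp
      also have "\<dots> = -(c^3+d^3)/3" by (simp only: e2')
      finally show ?thesis .
    qed
    have e3: "a*d^2+2*b*c*d = 3*a*b^2" using F3 by (metis right_minus_eq)
    have e4: "2*a*b*d+b^2*c = -(c*d^2)" using eq_neg_iff_add_eq_0[THEN iffD2, OF F4] .
    show "v \<in> proj_line (vec4 0 (- 1 / 3) 0 1) (vec4 1 0 1 0)"
      unfolding proj_line_def
      apply (rule CollectI, rule exI[of _ "\<alpha>*(c^3+d^3)+\<beta>*(3*c*d^2)"], rule exI[of _ "\<alpha>*(a^3+b^3) + \<beta>*(3*a*b^2)"])
      unfolding v2 e1 e2 e3 e4 using three by (simp add: vec4_inj field_simps)
  next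
    fix v :: "'a^4" assume "v \<in> proj_line (vec4 0 (- 1 / 3) 0 1) (vec4 1 0 1 0)"
    then obtain \<gamma> \<delta> :: 'a where v: "v = \<gamma> *s vec4 0 (- 1 / 3) 0 1 + \<delta> *s vec4 1 0 1 0"
      unfolding proj_line_def by auto
    define g where "g = \<gamma>/3"
    have v': "v = vec4 \<delta> (-g) \<delta> (3*g)" unfolding v g_def using three by (simp add: vec4_inj field_simps)
    define z where "z = symA d (-b) (-c) a *v v"
    have z2: "z$2 = -\<delta>*(2*a*b*d+b^2*c+c*d^2) + g*(3*a*b^2 - (a*d^2+2*b*c*d))"
      unfolding z_def v' symA_mv vec4_nth by (simp add: algebra_simps power2_eq_square power3_eq_cube)
    have z14: "z$1 - z$4 = g*(-3)*((a^3+b^3) - (a*c^2+b*d^2)) + \<delta>*(3*(a^2*c+b^2*d) + (c^3+d^3))"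
      unfolding z_def v' symA_mv vec4_nth by (simp add: algebra_simps power2_eq_square power3_eq_cube)
    have z2': "z$2 = 0" using z2 F3 F4 by simp
    have z14': "z$1 = z$4" using z14 F1 F2 by simp
    define u where "u = symAinv a b c d *v v"
    have u: "u = (1/(a*d-b*c))^3 *s z" unfolding u_def z_def by (rule symAinv_mv)
    have "u \<in> proj_line (vec4 1 0 0 1) (vec4 0 0 1 0)"
      by (rule Lc_mem) (simp_all add: u z2' z14')
    moreover have "v = A *v u" unfolding A_def u_def using symA_right_inv[OF det0] by simp
    ultimately show "v \<in> (\<lambda>v. A *v v) ` proj_line (vec4 1 0 0 1) (vec4 0 0 1 0)" by blast
  qed
  show ?thesis using part1 AG img unfolding same_Gq_orbit_def by blast
qed

end
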